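(* Let $d\geq 3$, $k\geq 1$ and $n=kd-2$. Then $\rho_n(d)(\Delta^2)$ acts on $A^n$ as multiplication by a scalar $\lambda\in A$ with $\lambda\neq 1$.
   Context: In the braid group $B_{n+1}$ with generators $s_1,\dots,s_n$, set $\Delta=(s_1s_2\cdots s_n)(s_1\cdots s_{n-1})\cdots(s_1s_2)(s_1)$. Then $\Delta^2$ is central in $B_{n+1}$. $A=\mathbb{Z}[q,q^{-1}]/(\Phi_d(q))$, where $\Phi_d$ is the $d$-th cyclotomic polynomial. $\rho_n(d):B_{n+1}\to GL_n(A)$ is the reduced Burau representation reduced mod $\Phi_d(q)$. It sends the generator $s_j$ to $T_j$, where $T_j(e_j)=-qe_j$, $T_j(e_{j-1})=e_{j-1}+qe_j$, $T_j(e_{j+1})=e_{j+1}+e_j$, and $T_j(e_k)=e_k$ for $|k-j|\geq 2$, with $e_1,\dots,e_n$ the standard basis. *)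

theory Defs
  imports "HOL-Analysis.Analysis" "HOL-Computational_Algebra.Polynomial"
    "Jordan_Normal_Form.Matrix"
begin

text \<open>The d-th cyclotomic polynomial: product of (X - z) over the primitive d-th roots
  of unity z = exp(2 pi i k/d), 0 <= k < d, gcd(k,d)=1; it has integer coefficients and
  we take the unique integer polynomial mapping to it.\<close>
definition cyclotomic_C :: "nat \<Rightarrow> complex poly" where
  "cyclotomic_C d = (\<Prod>k\<in>{k. k < d \<and> coprime k d}. [:- cis (2 * pi * real k / real d), 1:])"

definition cyclotomic :: "nat \<Rightarrow> int poly" where
  "cyclotomic d = (THE p. map_poly of_int p = cyclotomic_C d)"

text \<open>Matrix of the reduced Burau generator T_j (1-based j, basis e_1..e_n) over Z[q].
  Entry (r,c) (1-based) is the e_r-coefficient of T_j(e_c).\<close>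
definition burau_entry :: "nat \<Rightarrow> nat \<Rightarrow> nat \<Rightarrow> int poly" where
  "burau_entry j r c =
     (if c = j then (if r = j then [:0, -1:] else 0)
      else if c + 1 = j then (if r = c then 1 else if r = j then [:0, 1:] else 0)
      else if c = j + 1 then (if r = c then 1 else if r = j then 1 else 0)
      else (if r = c then 1 else 0))"

definition burau_T :: "nat \<Rightarrow> nat \<Rightarrow> int poly mat" where
  "burau_T n j = mat n n (\<lambda>(r, c). burau_entry j (r + 1) (c + 1))"

text \<open>Image of a positive braid word [j1,...,jm] (meaning s_j1 ... s_jm).\<close>
definition burau_word :: "nat \<Rightarrow> nat list \<Rightarrow> int poly mat" where
  "burau_word n w = foldr (\<lambda>j M. burau_T n j * M) w (1\<^sub>m n)"

text \<open>Delta = (s_1 ... s_n)(s_1 ... s_(n-1)) ... (s_1 s_2)(s_1).\<close>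
definition garside_word :: "nat \<Rightarrow> nat list" where
  "garside_word n = concat (map (\<lambda>m. [1..<m + 1]) (rev [1..<n + 1]))"

end

theory Submission
  imports Defs "Jordan_Normal_Form.Char_Poly"
begin


abbreviation qq :: "int poly" where "qq \<equiv> [:0,1:]"

lemma burau_T_carrier: "burau_T n i \<in> carrier_mat n n"
  by (simp add: burau_T_def)

lemma sum_delta_nat: "(\<Sum>k\<in>{0..<n::nat}. (if k = a then f k else 0)) = (if a < n then f a else (0::'a::comm_monoid_add))"
  by (induct n) auto

lemma rowT:
  assumes A: "A \<in> carrier_mat n n" and i: "1 \<le> i" "i \<le> n" and rc: "r < n" "c < n"
  shows "(burau_T n i * A) $$ (r,c) =
     (if r + 1 = i then (if 2 \<le> i then qq * A$$(i-2,c) else 0) - qq * A$$(i-1,c)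
        + (if i < n then A$$(i,c) else 0) else A$$(r,c))"
proof -
  have "(burau_T n i * A) $$ (r,c) = (\<Sum>k\<in>{0..<n}. burau_entry i (r+1) (k+1) * A$$(k,c))"
    using A rc by (simp add: burau_T_def scalar_prod_def)
  also have "\<dots> = (if r + 1 = i then (if 2 \<le> i then qq * A$$(i-2,c) else 0) - qq * A$$(i-1,c)
        + (if i < n then A$$(i,c) else 0) else A$$(r,c))"
  proof (cases "r + 1 = i")
    case False
    have "(\<Sum>k\<in>{0..<n}. burau_entry i (r+1) (k+1) * A$$(k,c)) = (\<Sum>k\<in>{0..<n}. (if k = r then A$$(k,c) else 0))"
      by (rule sum.cong) (use False in \<open>auto simp: burau_entry_def\<close>)
    then show ?thesis using False rc by (simp add: sum_delta_nat)
  next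
    case True
    have "(\<Sum>k\<in>{0..<n}. burau_entry i (r+1) (k+1) * A$$(k,c)) =
      (\<Sum>k\<in>{0..<n}. (if k = i - 2 then (if 2 \<le> i then qq * A$$(k,c) else 0) else 0))
      + (\<Sum>k\<in>{0..<n}. (if k = i - 1 then - qq * A$$(k,c) else 0))
      + (\<Sum>k\<in>{0..<n}. (if k = i then A$$(k,c) else 0))"
      unfolding sum.distrib[symmetric]
      by (rule sum.cong) (use True in \<open>auto simp: burau_entry_def\<close>)
    then show ?thesis using True rc i by (auto simp add: sum_delta_nat)
  qed
  finally show ?thesis .
qed

definition Pf :: "nat \<Rightarrow> nat \<Rightarrow> nat \<Rightarrow> int poly" where
  "Pf m r c = (if r < m \<and> r + c + 1 = m then - (qq ^ (r+1)) else if c = m \<and> r \<le> m then 1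
     else if m < c \<and> r = c then 1 else 0)"

definition Xf :: "nat \<Rightarrow> nat \<Rightarrow> nat \<Rightarrow> nat \<Rightarrow> int poly" where
  "Xf m i r c = (if r + 1 < i then Pf (m-1) r c else Pf m r c)"

lemma Pf_a: "r < m \<Longrightarrow> Pf m r c = (if r + c + 1 = m then - (qq ^ (r+1)) else if c = m then 1 else 0)"
  by (auto simp: Pf_def)
lemma Pf_b: "r < m \<Longrightarrow> Pf (m-1) r c = (if r + c + 2 = m then - (qq ^ (r+1)) else if c + 1 = m then 1 else 0)"
  by (auto simp: Pf_def)
lemma Pf_c: "r < m \<Longrightarrow> 1 \<le> r \<Longrightarrow> Pf (m-1) (r-1) c = (if r + c + 1 = m then - (qq ^ r) else if c + 1 = m then 1 else 0)"
  by (auto simp: Pf_def)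
lemma Pf_d: "r < m \<Longrightarrow> Pf m (r+1) c = (if r + c + 2 = m then - (qq ^ (r+2)) else if c = m then 1 else 0)"
  by (auto simp: Pf_def)

lemma key_row:
  assumes "r < m" "m \<le> n" "c < n"
  shows "(if 1 \<le> r then qq * Pf (m-1) (r-1) c else 0) - qq * Pf (m-1) r c
        + (if r + 1 < n then Pf m (r+1) c else 0) = Pf m r c"
proof -
  note * = Pf_a[OF assms(1)] Pf_b[OF assms(1)] Pf_d[OF assms(1)]
  show ?thesis
  proof (cases "1 \<le> r")
    case True
    note ** = Pf_c[OF assms(1) True]
    show ?thesis
    proof (cases "r + c + 1 = m")
      case True
      then show ?thesis using assms \<open>1 \<le> r\<close> unfolding * ** by (simp add: power_Suc) 
    next
      case False
      then show ?thesis using assms \<open>1 \<le> r\<close> unfolding * ** by simp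
    qed
  next
    case False
    then have r0: "r = 0" by simp
    show ?thesis
      using assms unfolding * by (simp add: r0 one_pCons)
  qed
qed

lemma burau_step:
  assumes "1 \<le> i" "i \<le> m" "m \<le> n"
  shows "burau_T n i * mat n n (\<lambda>(r,c). Xf m (i+1) r c) = mat n n (\<lambda>(r,c). Xf m i r c)"
proof (rule eq_matI)
  fix r c assume rc: "r < dim_row (mat n n (\<lambda>(r,c). Xf m i r c))" "c < dim_col (mat n n (\<lambda>(r,c). Xf m i r c))"
  then have rc': "r < n" "c < n" by auto
  show "(burau_T n i * mat n n (\<lambda>(r,c). Xf m (i+1) r c)) $$ (r,c) = mat n n (\<lambda>(r,c). Xf m i r c) $$ (r,c)"
  proof (cases "r + 1 = i")
    case False
    then show ?thesis using rc' assms by (simp add: rowT Xf_def)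
  next
    case True
    have "(burau_T n i * mat n n (\<lambda>(r,c). Xf m (i+1) r c)) $$ (r,c) =
      (if 1 \<le> r then qq * Pf (m-1) (r-1) c else 0) - qq * Pf (m-1) r c
        + (if r + 1 < n then Pf m (r+1) c else 0)"
      using True rc' assms by (cases "r = 0") (auto simp add: rowT Xf_def)
    also have "\<dots> = Pf m r c" using True rc' assms by (intro key_row) auto
    also have "Pf m r c = mat n n (\<lambda>(r,c). Xf m i r c) $$ (r,c)" using True rc' by (simp add: Xf_def)
    finally show ?thesis .
  qed
qed (auto simp: burau_T_def)


lemma burau_word_append: "burau_word n (xs @ ys) = foldr (\<lambda>j M. burau_T n j * M) xs (burau_word n ys)"
  by (simp add: burau_word_def)

lemma inner:
  assumes "m \<le> n" "1 \<le> m" "1 \<le> i" "i \<le> m + 1"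
  shows "foldr (\<lambda>j M. burau_T n j * M) [i..<m+1] (mat n n (\<lambda>(r,c). Pf (m-1) r c))
         = mat n n (\<lambda>(r,c). Xf m i r c)"
  using assms
proof (induction "m + 1 - i" arbitrary: i)
  case 0
  then have i: "i = m + 1" by simp
  show ?case unfolding i
    by (rule eq_matI) (use \<open>1 \<le> m\<close> in \<open>auto simp: Xf_def Pf_def\<close>)
next
  case (Suc t)
  have "i \<le> m" using Suc.hyps(2) by arith
  then have "[i..<m+1] = i # [i+1..<m+1]" by (simp add: upt_conv_Cons)
  then have "foldr (\<lambda>j M. burau_T n j * M) [i..<m+1] (mat n n (\<lambda>(r,c). Pf (m-1) r c))
      = burau_T n i * foldr (\<lambda>j M. burau_T n j * M) [i+1..<m+1] (mat n n (\<lambda>(r,c). Pf (m-1) r c))"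
    by simp
  also have "foldr (\<lambda>j M. burau_T n j * M) [i+1..<m+1] (mat n n (\<lambda>(r,c). Pf (m-1) r c))
      = mat n n (\<lambda>(r,c). Xf m (i+1) r c)"
    using Suc by (intro Suc.hyps) auto
  also have "burau_T n i * mat n n (\<lambda>(r,c). Xf m (i+1) r c) = mat n n (\<lambda>(r,c). Xf m i r c)"
    using Suc by (intro burau_step) auto
  finally show ?case .
qed

lemma garside_Suc: "garside_word (Suc m) = [1..<m+2] @ garside_word m"
  by (simp add: garside_word_def)

lemma garside_mat: "m \<le> n \<Longrightarrow> burau_word n (garside_word m) = mat n n (\<lambda>(r,c). Pf m r c)"
proof (induction m)
  case 0
  show ?case by (rule eq_matI) (auto simp: garside_word_def burau_word_def Pf_def)
next
  case (Suc m)
  have "burau_word n (garside_word (Suc m)) = foldr (\<lambda>j M. burau_T n j * M) [1..<m+2] (burau_word n (garside_word m))"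
    by (simp only: garside_Suc burau_word_append)
  also have "\<dots> = foldr (\<lambda>j M. burau_T n j * M) [1..<m+2] (mat n n (\<lambda>(r,c). Pf m r c))"
    using Suc by (simp only:)
  also have "\<dots> = mat n n (\<lambda>(r,c). Xf (Suc m) 1 r c)"
    using inner[of "Suc m" n 1] Suc.prems by (simp del: upt_Suc)
  also have "\<dots> = mat n n (\<lambda>(r,c). Pf (Suc m) r c)"
    by (simp add: Xf_def)
  finally show ?case .
qed

lemma burau_word_carrier: "burau_word n xs \<in> carrier_mat n n"
  by (induction xs) (auto simp: burau_word_def burau_T_def)

lemma foldr_mult: "B \<in> carrier_mat n n \<Longrightarrow> foldr (\<lambda>j M. burau_T n j * M) xs B = burau_word n xs * B"
proof (induction xs)
  case Nil
  then show ?case by (simp add: burau_word_def)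
next
  case (Cons a xs)
  have "burau_word n (a # xs) = burau_T n a * burau_word n xs" by (simp add: burau_word_def)
  then show ?case using Cons burau_word_carrier[of n xs] burau_T_carrier[of n a]
    by (simp add: assoc_mult_mat[of _ n n _ n _ n])
qed

lemma Pf_n: "r < n \<Longrightarrow> c < n \<Longrightarrow> Pf n r c = (if r + c + 1 = n then - (qq ^ (r+1)) else 0)"
  by (auto simp: Pf_def)

lemma delta_sq:
  assumes rc: "r < n" "c < n"
  shows "burau_word n (garside_word n @ garside_word n) $$ (r,c) = (if r = c then qq ^ (n+1) else 0)"
proof -
  have "burau_word n (garside_word n @ garside_word n) = burau_word n (garside_word n) * burau_word n (garside_word n)"
    by (simp add: burau_word_append foldr_mult burau_word_carrier)
  also have "\<dots> = mat n n (\<lambda>(r,c). Pf n r c) * mat n n (\<lambda>(r,c). Pf n r c)"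
    by (simp add: garside_mat)
  finally have "burau_word n (garside_word n @ garside_word n) $$ (r,c) =
     (\<Sum>k\<in>{0..<n}. Pf n r k * Pf n k c)"
    using rc by (simp add: scalar_prod_def)
  also have "\<dots> = (\<Sum>k\<in>{0..<n}. (if k = n - 1 - r then - (qq ^ (r+1)) * Pf n k c else 0))"
    by (rule sum.cong) (use rc in \<open>auto simp: Pf_n\<close>)
  also have "\<dots> = - (qq ^ (r+1)) * Pf n (n - 1 - r) c"
    using rc by (simp add: sum_delta_nat)
  also have "\<dots> = (if r = c then qq ^ (n+1) else 0)"
  proof (cases "r = c")
    case True
    have e: "r + 1 + (n - 1 - r + 1) = n + 1" using rc by simp
    have "Pf n (n - 1 - r) c = - (qq ^ (n - 1 - r + 1))" using rc True by (simp add: Pf_n)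
    then have "- (qq ^ (r+1)) * Pf n (n - 1 - r) c = qq ^ (r+1) * qq ^ (n - 1 - r + 1)" by simp
    also have "\<dots> = qq ^ (n+1)" by (simp only: power_add[symmetric] e)
    finally show ?thesis using True by simp
  next
    case False
    have "Pf n (n - 1 - r) c = 0" using rc False by (simp add: Pf_n)
    then show ?thesis using False by simp
  qed
  finally show ?thesis .
qed


definition zz :: "nat \<Rightarrow> nat \<Rightarrow> complex" where "zz d k = cis (2 * pi * real k / real d)"

lemma cyc_C_def': "cyclotomic_C d = (\<Prod>k\<in>{k. k < d \<and> coprime k d}. [:- zz d k, 1:])"
  by (simp add: cyclotomic_C_def zz_def)

lemma cis_ne_1:
  assumes "0 < x" "x < 2*pi" shows "cis x \<noteq> 1"
proof
  assume "cis x = 1"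
  then have "Re (cis x) = Re 1" by simp
  then have "cos x = 1" by simp
  then obtain n::int where n: "x = n*2*pi" by (auto simp: cos_one_2pi_int)
  have "0 < real_of_int n" using assms(1) n pi_gt_zero by (simp add: zero_less_mult_iff)
  moreover have "real_of_int n < 1" using assms(2) n pi_gt_zero by simp
  ultimately have "0 < n" "n < 1" by simp_all
  then show False by simp
qed

lemma zz_pow: "0 < d \<Longrightarrow> zz d k ^ d = 1"
proof -
  assume d: "0 < d"
  have "zz d k ^ d = cis (2 * pi * real k)"
    unfolding zz_def Complex.DeMoivre using d by (simp add: field_simps)
  also have "\<dots> = 1" by (rule cis_multiple_2pi) simp
  finally show ?thesis .
qed

lemma zz_ne_lt: assumes "0 < d" "j < k" "k < d" shows "zz d j \<noteq> zz d k"
proof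
  assume eq: "zz d j = zz d k"
  have 1: "zz d k / zz d j = cis (2 * pi * (real k - real j) / real d)"
    unfolding zz_def cis_divide by (rule arg_cong[where f=cis]) (use assms in \<open>simp add: field_simps\<close>)
  have "zz d k / zz d j = 1" using eq by (simp add: zz_def)
  moreover have "cis (2 * pi * (real k - real j) / real d) \<noteq> 1"
  proof (rule cis_ne_1)
    show "0 < 2 * pi * (real k - real j) / real d" using assms pi_gt_zero by simp
    have "(real k - real j) / real d < 1" using assms by simp
    then have "2 * pi * ((real k - real j) / real d) < 2 * pi * 1" using pi_gt_zero
      by (intro mult_strict_left_mono) auto
    then show "2 * pi * (real k - real j) / real d < 2 * pi" by simp
  qed
  ultimately show False using 1 by simp
qed

lemma zz_inj: "0 < d \<Longrightarrow> inj_on (zz d) {0..<d}"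
  unfolding inj_on_def
  by (metis atLeastLessThan_iff linorder_neqE_nat zz_ne_lt)

lemma xd:
  assumes d: "0 < d"
  shows "monom 1 d - 1 = (\<Prod>k\<in>{0..<d}. [:- zz d k, 1:])"
proof (rule poly_eqI_degree_lead_coeff[where n = d and A = "zz d ` {0..<d}"])
  show "coeff (monom 1 d - 1) d = coeff (\<Prod>k\<in>{0..<d}. [:- zz d k, 1:]) d"
  proof -
    have deg: "degree (\<Prod>k\<in>{0..<d}. [:- zz d k, 1:]) = d"
      by (subst degree_prod_sum_eq) auto
    have "coeff (\<Prod>k\<in>{0..<d}. [:- zz d k, 1:]) d = 1"
      using lead_coeff_prod[of "\<lambda>k. [:- zz d k, 1:]" "{0..<d}"] deg by simp
    moreover have "coeff (monom 1 d - 1 :: complex poly) d = 1" using d by (simp add: coeff_monom)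
    ultimately show ?thesis by simp
  qed
  show "d \<le> card (zz d ` {0..<d})" using zz_inj[OF d] by (simp add: card_image)
  show "degree (monom 1 d - 1 :: complex poly) \<le> d"
    by (rule order.trans[OF degree_diff_le_max]) (simp add: degree_monom_le)
  show "degree (\<Prod>k\<in>{0..<d}. [:- zz d k, 1:]) \<le> d"
    by (subst degree_prod_sum_eq) auto
  fix z assume "z \<in> zz d ` {0..<d}"
  then obtain k where k: "k < d" "z = zz d k" by auto
  have "poly (monom 1 d - 1) z = 0" using k zz_pow[OF d] by (simp add: poly_monom)
  moreover have "poly (\<Prod>k\<in>{0..<d}. [:- zz d k, 1:]) z = 0"
    using k by (auto simp: poly_prod intro!: bexI[of _ k])
  ultimately show "poly (monom 1 d - 1) z = poly (\<Prod>k\<in>{0..<d}. [:- zz d k, 1:]) z" by simp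
qed


lemma wit1:
  fixes d e j b :: nat
  assumes d: "0 < d" and e: "e dvd d" and j: "j < e" and cop: "coprime j e"
  shows "d div gcd (j * (d div e)) d = e \<and> j * (d div e) div gcd (j * (d div e)) d = j"
proof -
  obtain m where m: "d = e * m" using e by blast
  have m0: "m > 0" using d m by (cases m) auto
  have e0: "e > 0" using d m by (cases e) auto
  have dm: "d div e = m" using m e0 by simp
  have g: "gcd (j * m) d = m"
    unfolding m using cop gcd_mult_distrib_nat[of m j e] by (simp add: mult.commute coprime_iff_gcd_eq_1)
  show ?thesis unfolding dm g using m m0 by simp
qed

lemma wit2:
  fixes d e j b :: nat
  assumes d: "0 < d" and e: "e dvd d" and j: "j < e"
  shows "j * (d div e) < d"
proof -
  obtain m where m: "d = e * m" using e by blast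
  have m0: "m > 0" using d m by (cases m) auto
  have e0: "e > 0" using d m by (cases e) auto
  show ?thesis using m m0 e0 j by simp
qed

lemma wit3:
  fixes d e j b :: nat
  assumes d: "0 < d" and b: "b < d"
  shows "b div gcd b d * (d div (d div gcd b d)) = b"
    and "d div gcd b d dvd d"
    and "b div gcd b d < d div gcd b d"
    and "coprime (b div gcd b d) (d div gcd b d)"
proof -
  let ?g = "gcd b d"
  have g0: "?g > 0" using d gcd_pos_nat[of b d] by simp
  obtain u where u: "d = ?g * u" by (meson gcd_dvd2 dvdE)
  obtain v where v: "b = ?g * v" by (meson gcd_dvd1 dvdE)
  have "?g * u div ?g = u" using g0 by simp
  then have du: "d div ?g = u" by (simp only: u[symmetric])
  have "?g * v div ?g = v" using g0 by simp
  then have bv: "b div ?g = v" by (simp only: v[symmetric])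
  have u0: "u > 0" by (metis d mult_0_right neq0_conv u less_irrefl)
  show "b div gcd b d * (d div (d div gcd b d)) = b"
  proof -
    have "?g * u div u = ?g" using u0 by simp
    then have "d div u = ?g" by (simp only: u[symmetric])
    then show ?thesis unfolding du bv by (metis v mult.commute)
  qed
  show "d div gcd b d dvd d" unfolding du by (metis u dvd_triv_right)
  show "b div gcd b d < d div gcd b d" unfolding du bv using u v b g0
    by (metis mult_less_cancel1)
  show "coprime (b div gcd b d) (d div gcd b d)"
    by (rule div_gcd_coprime) (use d in simp)
qed

lemma zz_scale:
  fixes d e j b :: nat
  assumes d: "0 < d" and e: "e dvd d"
  shows "zz d (j * (d div e)) = zz e j"
proof -
  obtain m where m: "d = e * m" using e by blast
  have m0: "m > 0" using d m by (cases m) auto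
  have e0: "e > 0" using d m by (cases e) auto
  have dm: "d div e = m" using m e0 by simp
  show ?thesis unfolding zz_def dm m using m0 e0
    by (simp add: field_simps)
qed

lemma regroup:
  fixes d :: nat
  assumes d: "0 < d"
  shows "(\<Prod>k\<in>{0..<d}. [:- zz d k, 1:]) = (\<Prod>e\<in>{e. e dvd d}. cyclotomic_C e)"
proof -
  let ?S = "SIGMA e:{e. e dvd d}. {j. j < e \<and> coprime j e}"
  have fin: "finite {e. e dvd d}" using d by simp
  have "(\<Prod>e\<in>{e. e dvd d}. cyclotomic_C e) =
      (\<Prod>e\<in>{e. e dvd d}. \<Prod>j\<in>{j. j < e \<and> coprime j e}. [:- zz e j, 1:])"
    by (simp add: cyc_C_def')
  also have "\<dots> = (\<Prod>(e,j)\<in>?S. [:- zz e j, 1:])"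
    by (rule prod.Sigma) (auto simp: fin)
  also have "\<dots> = (\<Prod>k\<in>{0..<d}. [:- zz d k, 1:])"
  proof (rule prod.reindex_bij_witness[where i = "\<lambda>k. (d div gcd k d, k div gcd k d)"
        and j = "\<lambda>(e,j). j * (d div e)"])
    fix a assume "a \<in> ?S"
    then obtain e j where a: "a = (e,j)" "e dvd d" "j < e" "coprime j e" by auto
    show "(d div gcd (case a of (e, j) \<Rightarrow> j * (d div e)) d,
           (case a of (e, j) \<Rightarrow> j * (d div e)) div gcd (case a of (e, j) \<Rightarrow> j * (d div e)) d) = a"
      using wit1[OF d a(2-4)] a(1) by simp
    show "(case a of (e, j) \<Rightarrow> j * (d div e)) \<in> {0..<d}"
      using wit2[OF d a(2-3)] a(1) by simp
    show "[:- zz d (case a of (e, j) \<Rightarrow> j * (d div e)), 1:] = (case a of (e, j) \<Rightarrow> [:- zz e j, 1:])"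
      using zz_scale[OF d a(2)] a(1) by simp
  next
    fix b assume "b \<in> {0..<d}"
    then have b: "b < d" by simp
    show "(case (d div gcd b d, b div gcd b d) of (e, j) \<Rightarrow> j * (d div e)) = b"
      using wit3(1)[OF d b] by simp
    show "(d div gcd b d, b div gcd b d) \<in> ?S"
      using wit3(2-4)[OF d b] by simp
  qed
  finally show ?thesis by simp
qed

lemma xd_cyc:
  assumes d: "0 < d"
  shows "monom 1 d - 1 = (\<Prod>e\<in>{e. e dvd d}. cyclotomic_C e)"
  using xd[OF d] regroup[OF d] by simp


lemma lc_cyc: "lead_coeff (cyclotomic_C e) = 1"
  unfolding cyc_C_def' lead_coeff_prod by simp

lemma cyc_int: "0 < d \<Longrightarrow> \<exists>p. map_poly of_int p = cyclotomic_C d"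
proof (induction d rule: less_induct)
  case (less d)
  let ?E = "{e. e dvd d \<and> e \<noteq> d}"
  have finE: "finite ?E" using less.prems by simp
  have "\<forall>e\<in>?E. \<exists>p. map_poly of_int p = cyclotomic_C e"
  proof
    fix e assume e: "e \<in> ?E"
    then have "e \<le> d" using less.prems by (auto intro: dvd_imp_le)
    then have "e < d" using e by auto
    moreover have "0 < e" using e less.prems by (auto intro: Nat.gr0I)
    ultimately show "\<exists>p. map_poly of_int p = cyclotomic_C e" using less.IH by blast
  qed
  then obtain P where P: "\<And>e. e \<in> ?E \<Longrightarrow> map_poly of_int (P e) = cyclotomic_C e" by metis
  define Q where "Q = (\<Prod>e\<in>?E. P e)"
  have mQ: "map_poly (of_int :: int \<Rightarrow> complex) Q = (\<Prod>e\<in>?E. cyclotomic_C e)"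
    unfolding Q_def by (simp add: hom_distribs P)
  have "of_int (lead_coeff Q) = lead_coeff (map_poly (of_int :: int \<Rightarrow> complex) Q)" by simp
  also have "\<dots> = 1" unfolding mQ lead_coeff_prod lc_cyc by simp
  finally have lcQ: "lead_coeff Q = 1" by simp
  then have Q0: "Q \<noteq> 0" by auto
  have split: "{e. e dvd d} = insert d ?E" by auto
  have X: "monom 1 d - 1 = cyclotomic_C d * map_poly of_int Q"
    using xd_cyc[OF less.prems] unfolding split mQ using finE by simp
  obtain s r where pd: "pseudo_divmod (monom 1 d - 1 :: int poly) Q = (s, r)" by fastforce
  note pdm = pseudo_divmod[OF Q0 pd]
  have eq: "monom 1 d - 1 = Q * s + r" using pdm(1) lcQ by simp
  have "map_poly (of_int :: int \<Rightarrow> complex) (monom 1 d - 1) = monom 1 d - 1"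
    by (simp add: hom_distribs map_poly_monom)
  then have "monom 1 d - 1 = map_poly of_int Q * map_poly of_int s + map_poly (of_int :: int \<Rightarrow> complex) r"
    unfolding eq by (simp add: hom_distribs)
  then have R: "map_poly of_int Q * (cyclotomic_C d - map_poly of_int s) = map_poly (of_int :: int \<Rightarrow> complex) r"
    unfolding X by (simp add: algebra_simps)
  show ?case
  proof (rule ccontr)
    assume "\<not> ?case"
    then have D: "cyclotomic_C d - map_poly of_int s \<noteq> 0" by auto
    have mQ0: "map_poly (of_int :: int \<Rightarrow> complex) Q \<noteq> 0" using Q0 by simp
    have dg: "degree (map_poly of_int Q * (cyclotomic_C d - map_poly of_int s)) \<ge> degree Q"
      using D mQ0 by (simp add: degree_mult_eq)
    show False
    proof (cases "r = 0")
      case True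
      then show False using R D mQ0 by simp
    next
      case False
      then have "degree r < degree Q" using pdm(2) by auto
      then show False using R dg by simp
    qed
  qed
qed

lemma cyclotomic_map: "0 < d \<Longrightarrow> map_poly of_int (cyclotomic d) = cyclotomic_C d"
proof -
  assume d: "0 < d"
  obtain p where p: "map_poly (of_int :: int \<Rightarrow> complex) p = cyclotomic_C d"
    using cyc_int[OF d] by blast
  have "\<exists>!p. map_poly (of_int :: int \<Rightarrow> complex) p = cyclotomic_C d"
  proof (rule ex1I[of _ p])
    show "map_poly (of_int :: int \<Rightarrow> complex) p = cyclotomic_C d" using p .
    fix y assume "map_poly (of_int :: int \<Rightarrow> complex) y = cyclotomic_C d"
    then have "map_poly (of_int :: int \<Rightarrow> complex) y = map_poly of_int p" using p by simp
    then show "y = p" by simp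
  qed
  then show ?thesis unfolding cyclotomic_def by (rule theI')
qed

lemma not_dvd:
  fixes d N :: nat
  assumes d: "3 \<le> d" and k: "1 \<le> k" and N: "N + 1 = k * d"
  shows "\<not> cyclotomic d dvd ([:0,1:] ^ N - 1)"
proof
  assume "cyclotomic d dvd ([:0,1:] ^ N - 1)"
  then obtain s where s: "[:0,1:] ^ N - 1 = cyclotomic d * s" by blast
  have d0: "0 < d" using d by simp
  have "map_poly (of_int :: int \<Rightarrow> complex) ([:0,1:] ^ N - 1) = [:0,1:] ^ N - 1"
    by (simp add: hom_distribs)
  then have E: "[:0,1:] ^ N - 1 = cyclotomic_C d * map_poly of_int s"
    unfolding s by (simp add: hom_distribs cyclotomic_map[OF d0])
  let ?w = "zz d 1"
  have mem: "1 \<in> {k. k < d \<and> coprime k d}" using d by simp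
  have "poly (cyclotomic_C d) ?w = 0"
    unfolding cyc_C_def' poly_prod by (rule prod_zero) (use mem in \<open>auto intro!: bexI[of _ 1]\<close>)
  then have "poly ([:0,1:] ^ N - 1) ?w = 0" unfolding E by simp
  then have wN: "?w ^ N = 1" by simp
  have "?w ^ (k * d) = 1" using zz_pow[OF d0] by (simp add: power_mult mult.commute[of k d])
  then have "?w ^ N * ?w = 1" unfolding N[symmetric] by (simp add: mult.commute)
  then have "?w = 1" using wN by simp
  moreover have "zz d 0 = 1" by (simp add: zz_def)
  ultimately show False using zz_ne_lt[of d 0 1] d by simp
qed


theorem lemma4p5:
  fixes d k n :: nat
  assumes "d \<ge> 3" and "k \<ge> 1" and "n = k * d - 2"
  shows "\<exists>c0 :: int poly.
           (\<forall>r < n. \<forall>c < n.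
              cyclotomic d dvd
                (burau_word n (garside_word n @ garside_word n) $$ (r, c)
                 - (if r = c then c0 else 0)))
         \<and> \<not> cyclotomic d dvd (c0 - 1)"
proof (intro exI[of _ "qq ^ (n+1)"] conjI allI impI)
  fix r c assume "r < n" "c < n"
  then show "cyclotomic d dvd
                (burau_word n (garside_word n @ garside_word n) $$ (r, c)
                 - (if r = c then qq ^ (n+1) else 0))"
    by (simp add: delta_sq)
next
  have "k * d \<ge> 3" using assms by (metis mult_le_mono mult_1)
  then have "n + 1 + 1 = k * d" using assms(3) by simp
  then show "\<not> cyclotomic d dvd (qq ^ (n+1) - 1)"
    using not_dvd[OF assms(1,2)] by blast
qed

end
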